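(* For all integers $L\ge1$ and $M\ge L+1$, $$\min_{w\in\mathbb{R}^L}\|Bw-\mathbf 1\|_2=\left[\frac{\binom{M+L+1}{L+1}}{\binom{M}{L+1}}-1\right]^{-1/2}.$$ Moreover, there exist absolute constants $0<c_1\le c_2$ such that for all integers $L\ge1$ and $M\ge L+1$, $$\exp\Big(c_1\frac{L^2}{M}\Big)\le\frac{\binom{M+L+1}{L+1}}{\binom{M}{L+1}}\le\exp\Big(c_2\frac{L^2}{M}\Big),$$ i.e. the minimum equals $\big[\exp(\Theta(L^2/M))-1\big]^{-1/2}$.
   Context: $B$ is the $M\times L$ real matrix with entries $B_{ij}=(i/M)^j$ for $1\le i\le M$, $1\le j\le L$; $\mathbf 1$ is the all-ones vector in $\mathbb{R}^M$; $\|\cdot\|_2$ is the Euclidean norm. *)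

theory Defs
  imports "HOL-Analysis.Analysis"
begin

text \<open>Entries of the M x L matrix B: B i j = (i/M)^j, for 1 \<le> i \<le> M, 1 \<le> j \<le> L.\<close>
definition Bmat :: "nat \<Rightarrow> nat \<Rightarrow> nat \<Rightarrow> real" where
  "Bmat M i j = (real i / real M) ^ j"

definition resid :: "nat \<Rightarrow> nat \<Rightarrow> (nat \<Rightarrow> real) \<Rightarrow> real" where
  "resid M L w = sqrt (\<Sum>i=1..M. ((\<Sum>j=1..L. Bmat M i j * w j) - 1)^2)"

definition binom_ratio :: "nat \<Rightarrow> nat \<Rightarrow> real" where
  "binom_ratio M L = real ((M + L + 1) choose (L + 1)) / real (M choose (L + 1))"

end

theory Submission
  imports Defs "HOL-Computational_Algebra.Polynomial"
begin


definition nab :: "(int \<Rightarrow> real) \<Rightarrow> int \<Rightarrow> real" where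
  "nab f x = f x - f (x - 1)"
definition fdf :: "(int \<Rightarrow> real) \<Rightarrow> int \<Rightarrow> real" where
  "fdf s x = s (x + 1) - s x"

lemma nab_ap: "nab f x = f x - f (x - 1)" by (simp add: nab_def)
lemma fdf_ap: "fdf f x = f (x + 1) - f x" by (simp add: fdf_def)
lemma nab_Suc: "(nab^^Suc n) f x = (nab^^n) f x - (nab^^n) f (x - 1)" by (simp add: nab_ap)

lemma nab_support:
  assumes "\<forall>x. (x < a \<or> x > b) \<longrightarrow> f x = 0"
  shows "x < a \<or> x > b + int n \<Longrightarrow> (nab^^n) f x = 0"
proof (induction n arbitrary: x)
  case 0 then show ?case using assms by auto
next
  case (Suc n)
  have "(nab^^Suc n) f x = (nab^^n) f x - (nab^^n) f (x - 1)" by (simp add: nab_ap)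
  also have "\<dots> = 0" using Suc.IH[of x] Suc.IH[of "x - 1"] Suc.prems by auto
  finally show ?case .
qed

lemma nab_local:
  "(\<forall>y. x - int n \<le> y \<and> y \<le> x \<longrightarrow> f y = g y) \<Longrightarrow> (nab^^n) f x = (nab^^n) g x"
proof (induction n arbitrary: x)
  case 0 then show ?case by simp
next
  case (Suc n)
  have a: "(nab^^n) f x = (nab^^n) g x" by (rule Suc.IH) (use Suc.prems in auto)
  have b: "(nab^^n) f (x-1) = (nab^^n) g (x-1)" by (rule Suc.IH) (use Suc.prems in auto)
  show ?case using a b by (simp only: nab_Suc)
qed

lemma nab_zero: "(nab^^n) (\<lambda>_. 0) = (\<lambda>_. 0)"
  by (induction n) (auto simp: nab_ap fun_eq_iff)

lemma nab_below:
  "(\<forall>y. x - int n \<le> y \<and> y < x \<longrightarrow> f y = 0) \<Longrightarrow> (nab^^n) f x = f x"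
proof (induction n arbitrary: x)
  case 0 then show ?case by simp
next
  case (Suc n)
  have a: "(nab^^n) f x = f x" by (rule Suc.IH) (use Suc.prems in auto)
  have b: "(nab^^n) f (x-1) = (nab^^n) (\<lambda>_. 0) (x-1)" by (rule nab_local) (use Suc.prems in auto)
  show ?case using a b by (simp only: nab_Suc nab_zero)
qed

lemma nab_delta:
  "(nab^^n) (\<lambda>i. if i = a then c else 0) (a + int n) = (-1)^n * c"
proof (induction n)
  case 0 then show ?case by simp
next
  case (Suc n)
  have z: "(nab^^n) (\<lambda>i. if i = a then c else 0) (a + int (Suc n)) = 0"
    by (rule nab_support[of a a]) auto
  have "(nab^^Suc n) (\<lambda>i. if i = a then c else 0) (a + int (Suc n)) =
     (nab^^n) (\<lambda>i. if i = a then c else 0) (a + int (Suc n)) - (nab^^n) (\<lambda>i. if i = a then c else 0) (a + int n)"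
    by (simp add: nab_ap)
  then show ?case using z Suc.IH by simp
qed

lemma nab_diff: "(nab^^n) (\<lambda>i. f i - g i) x = (nab^^n) f x - (nab^^n) g x"
  by (induction n arbitrary: x) (auto simp: nab_ap)

lemma sbp_base:
  assumes "A \<le> B + 1"
  shows "(\<Sum>i\<in>{A..B}. nab g i * s i) = g B * s (B+1) - g (A-1) * s A - (\<Sum>i\<in>{A..B}. g i * fdf s i)"
proof -
  have "A - 1 \<le> B" using assms by simp
  then show ?thesis
proof (induction B rule: int_ge_induct)
  case base then show ?case by simp
next
  case (step B)
  have e: "{A..B+1} = insert (B+1) {A..B}" using step atLeastAtMostPlus1_int_conv[of A B] by (simp add: add.commute)
  have "(\<Sum>i\<in>{A..B+1}. nab g i * s i) = nab g (B+1) * s (B+1) + (\<Sum>i\<in>{A..B}. nab g i * s i)"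
    by (simp add: e)
  also have "\<dots> = nab g (B+1) * s (B+1) + (g B * s (B+1) - g (A-1) * s A - (\<Sum>i\<in>{A..B}. g i * fdf s i))"
    using step by simp
  also have "\<dots> = g (B+1) * s (B+1+1) - g (A-1) * s A - (g (B+1) * fdf s (B+1) + (\<Sum>i\<in>{A..B}. g i * fdf s i))"
    by (simp add: nab_ap fdf_def algebra_simps)
  also have "\<dots> = g (B+1) * s (B+1+1) - g (A-1) * s A - (\<Sum>i\<in>{A..B+1}. g i * fdf s i)"
    by (simp add: e)
  finally show ?case .
qed
qed

lemma sbp_iter:
  assumes "\<forall>x. (x < a \<or> x > b) \<longrightarrow> g x = 0" "A \<le> a" "a \<le> b" "b + int n \<le> B"
  shows "(\<Sum>i\<in>{A..B}. (nab^^n) g i * s i) = (-1)^n * (\<Sum>i\<in>{A..B}. g i * (fdf^^n) s i)"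
  using assms(4)
proof (induction n arbitrary: s)
  case 0 then show ?case by simp
next
  case (Suc n)
  let ?G = "(nab^^n) g"
  have G1: "?G B = 0" by (rule nab_support[OF assms(1)]) (use Suc.prems in auto)
  have G2: "?G (A - 1) = 0" by (rule nab_support[OF assms(1)]) (use assms in auto)
  have "(\<Sum>i\<in>{A..B}. (nab^^Suc n) g i * s i) = (\<Sum>i\<in>{A..B}. nab ?G i * s i)" by simp
  also have "\<dots> = - (\<Sum>i\<in>{A..B}. ?G i * fdf s i)"
    using sbp_base[of A B ?G s] G1 G2 assms Suc.prems by simp
  also have "\<dots> = - ((-1)^n * (\<Sum>i\<in>{A..B}. g i * (fdf^^n) (fdf s) i))"
    using Suc.IH[of "fdf s"] Suc.prems by simp
  also have "\<dots> = (-1)^Suc n * (\<Sum>i\<in>{A..B}. g i * (fdf^^Suc n) s i)"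
    by (simp add: funpow_Suc_right del: funpow.simps)
  finally show ?case .
qed


lemma deg_shift_diff:
  fixes p :: "real poly"
  shows "degree (pcompose p [:c,1:] - p) \<le> degree p - 1"
proof (cases "degree p = 0")
  case True
  then obtain a where "p = [:a:]" by (metis degree_eq_zeroE)
  then show ?thesis by simp
next
  case False
  let ?q = "pcompose p [:c,1:]"
  have dq: "degree ?q = degree p" by (simp add: degree_pcompose)
  have lc: "coeff ?q (degree p) = coeff p (degree p)"
    using lead_coeff_comp[of "[:c,1:]" p] dq by simp
  show ?thesis
  proof (rule degree_le, intro allI impI)
    fix i assume "degree p - 1 < i"
    then have "i = degree p \<or> i > degree p" using False by auto
    then show "coeff (?q - p) i = 0"
    proof
      assume "i = degree p" then show ?thesis using lc by simp
    next
      assume "i > degree p" then show ?thesis using dq by (simp add: coeff_eq_0)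
    qed
  qed
qed

lemma deg_shift_diff': "degree (p - pcompose p [:c,1:] :: real poly) \<le> degree p - 1"
proof -
  have "p - pcompose p [:c,1:] = - (pcompose p [:c,1:] - p)" by simp
  then show ?thesis using deg_shift_diff[of p c] by (simp only: degree_minus)
qed

definition Dp :: "real poly \<Rightarrow> real poly" where "Dp q = pcompose q [:1,1:] - q"
definition Np :: "real poly \<Rightarrow> real poly" where "Np q = q - pcompose q [:-1,1:]"

lemma Np_ap: "poly (Np q) x = poly q x - poly q (x - 1)" by (simp add: Np_def poly_pcompose)
lemma Dp_ap: "poly (Dp q) x = poly q (x + 1) - poly q x" by (simp add: Dp_def poly_pcompose add.commute)

lemma Np_deg: "degree ((Np^^n) p) \<le> degree p - n"
proof (induction n)
  case 0 then show ?case by simp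
next
  case (Suc n)
  have "degree ((Np^^Suc n) p) = degree (Np ((Np^^n) p))" by simp
  also have "\<dots> \<le> degree ((Np^^n) p) - 1" unfolding Np_def by (rule deg_shift_diff')
  finally show ?case using Suc by linarith
qed

lemma Dp_deg: "degree ((Dp^^n) p) \<le> degree p - n"
proof (induction n)
  case 0 then show ?case by simp
next
  case (Suc n)
  have "degree ((Dp^^Suc n) p) = degree (Dp ((Dp^^n) p))" by simp
  also have "\<dots> \<le> degree ((Dp^^n) p) - 1" unfolding Dp_def by (rule deg_shift_diff)
  finally show ?case using Suc by linarith
qed

lemma Dp_vanish: "degree p < n \<Longrightarrow> (Dp^^n) p = 0"
proof -
  assume "degree p < n"
  then obtain m where n: "n = Suc m" and m: "degree p \<le> m" by (cases n) auto
  have "degree ((Dp^^m) p) = 0" using Dp_deg[of m p] m by simp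
  then obtain a where "(Dp^^m) p = [:a:]" by (metis degree_eq_zeroE)
  then show ?thesis unfolding n by (simp add: Dp_def)
qed

lemma nab_poly: "(nab^^n) (\<lambda>i. poly p (of_int i)) = (\<lambda>i. poly ((Np^^n) p) (of_int i))"
proof (induction n)
  case 0 then show ?case by simp
next
  case (Suc n)
  show ?case
  proof (rule ext)
    fix i :: int
    have "(nab^^Suc n) (\<lambda>i. poly p (of_int i)) i = nab ((nab^^n) (\<lambda>i. poly p (of_int i))) i" by simp
    also have "\<dots> = nab (\<lambda>i. poly ((Np^^n) p) (of_int i)) i" by (simp only: Suc)
    also have "\<dots> = poly (Np ((Np^^n) p)) (of_int i)" by (simp only: nab_ap Np_ap) simp
    finally show "(nab^^Suc n) (\<lambda>i. poly p (of_int i)) i = poly ((Np^^Suc n) p) (of_int i)" by simp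
  qed
qed

lemma fdf_poly: "(fdf^^n) (\<lambda>i. poly p (of_int i)) = (\<lambda>i. poly ((Dp^^n) p) (of_int i))"
proof (induction n)
  case 0 then show ?case by simp
next
  case (Suc n)
  show ?case
  proof (rule ext)
    fix i :: int
    have "(fdf^^Suc n) (\<lambda>i. poly p (of_int i)) i = fdf ((fdf^^n) (\<lambda>i. poly p (of_int i))) i" by simp
    also have "\<dots> = fdf (\<lambda>i. poly ((Dp^^n) p) (of_int i)) i" by (simp only: Suc)
    also have "\<dots> = poly (Dp ((Dp^^n) p)) (of_int i)" by (simp only: fdf_ap Dp_ap) simp
    finally show "(fdf^^Suc n) (\<lambda>i. poly p (of_int i)) i = poly ((Dp^^Suc n) p) (of_int i)" by simp
  qed
qed

lemma fdf_monom: "j < n \<Longrightarrow> (fdf^^n) (\<lambda>i. (of_int i :: real) ^ j) = (\<lambda>_. 0)"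
proof -
  assume j: "j < n"
  have "(\<lambda>i. (of_int i :: real) ^ j) = (\<lambda>i. poly (monom 1 j) (of_int i))" by (simp add: poly_monom)
  then show ?thesis using fdf_poly[of n "monom 1 j"] Dp_vanish[of "monom 1 j" n] j
    by (simp add: degree_monom_eq)
qed



lemma prodM: "(\<Prod>k\<in>{0..L}. real M - real k) = fact (L+1) * real (M choose (L+1))"
proof -
  have "fact (L+1) * real (M choose (L+1)) = fact (L+1) * (real M gchoose (L+1))"
    by (simp add: binomial_gbinomial)
  also have "\<dots> = (\<Prod>i=0..<L+1. real M - of_nat i)" by (rule gbinomial_mult_fact)
  also have "{0..<L+1} = {0..L}" by auto
  finally show ?thesis by simp
qed

lemma prod1: "(\<Prod>k\<in>{1..L}. real k) = fact L"
  by (simp add: fact_prod)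

lemma prod1neg: "(\<Prod>k\<in>{1..L}. real k - real (L+1)) = (-1)^L * fact L"
proof -
  have "(\<Prod>k\<in>{1..L}. real k - real (L+1)) = (\<Prod>k\<in>{1..L}. - real (L + 1 - k))"
    by (rule prod.cong) auto
  also have "\<dots> = (-1)^L * (\<Prod>k\<in>{1..L}. real (L + 1 - k))" by (simp only: prod_uminus card_atLeastAtMost) simp
  also have "(\<Prod>k\<in>{1..L}. real (L + 1 - k)) = (\<Prod>k\<in>{1..L}. real k)"
    using prod.atLeastAtMost_rev[of "\<lambda>k. real k" 1 L] by (simp add: add.commute)
  finally show ?thesis by (simp add: fact_prod of_nat_prod)
qed

lemma C_strict:
  assumes "L + 1 \<le> M"
  shows "real (M choose (L+1)) < real ((M+L+1) choose (L+1))"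
proof -
  have "(\<Prod>k\<in>{0..L}. real M - real k) < (\<Prod>k\<in>{0..L}. real (M+L+1) - real k)"
    by (rule prod_mono_strict[of 0]) (use assms in auto)
  then show ?thesis by (simp only: prodM) simp
qed


lemma sum_int_conv:
  "(\<Sum>i\<in>{0..int M}. F i) = F 0 + (\<Sum>i=1..M. F (int i))"
proof -
  have "(\<Sum>i\<in>{0..int M}. F i) = (\<Sum>i\<in>int ` {0..M}. F i)" by (simp add: image_int_atLeastAtMost)
  also have "\<dots> = (\<Sum>i\<in>{0..M}. F (int i))" by (simp add: sum.reindex)
  also have "\<dots> = F 0 + (\<Sum>i=Suc 0..M. F (int i))" by (simp add: sum.atLeast_Suc_atMost)
  finally show ?thesis by simp
qed

lemma key:
  fixes L M :: nat
  assumes L1: "1 \<le> L" and LM: "L + 1 \<le> M"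
  shows "\<exists>Pp::real poly. degree Pp \<le> L \<and>
     (\<forall>j\<in>{1..L}. (\<Sum>i=1..M. poly Pp (real i) * real i ^ j) = 0) \<and>
     (\<Sum>i=1..M. poly Pp (real i)) = - (fact L * (fact (L+1) * real (M choose (L+1)))) \<and>
     poly Pp 0 = fact L * (fact (L+1) * real (M choose (L+1)))
                 - fact L * (fact (L+1) * real ((M+L+1) choose (L+1)))"
proof -
  define Hp :: "real poly" where
    "Hp = (\<Prod>k\<in>{1..L}. [:real k, 1:]) * (\<Prod>k\<in>{0..L}. [:real M - real k, -1:])"
  have Hpoly: "\<And>x. poly Hp x = (\<Prod>k\<in>{1..L}. real k + x) * (\<Prod>k\<in>{0..L}. real M - real k - x)"
    by (simp add: Hp_def poly_prod)
  have d1: "degree (\<Prod>k\<in>{1..L}. [:real k, 1::real:]) \<le> L"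
  proof -
    have "degree (\<Prod>k\<in>{1..L}. [:real k, 1::real:]) \<le> (\<Sum>k\<in>{1..L}. degree [:real k, 1::real:])"
      using degree_prod_sum_le[of "{1..L}" "\<lambda>k. [:real k, 1::real:]"] by (simp add: o_def)
    then show ?thesis by simp
  qed
  have d2: "degree (\<Prod>k\<in>{0..L}. [:real M - real k, -1::real:]) \<le> L + 1"
  proof -
    have "degree (\<Prod>k\<in>{0..L}. [:real M - real k, -1::real:]) \<le> (\<Sum>k\<in>{0..L}. degree [:real M - real k, -1::real:])"
      using degree_prod_sum_le[of "{0..L}" "\<lambda>k. [:real M - real k, -1::real:]"] by (simp add: o_def)
    then show ?thesis by simp
  qed
  have degH: "degree Hp \<le> 2*L+1"
    using degree_mult_le[of "\<Prod>k\<in>{1..L}. [:real k, 1::real:]" "\<Prod>k\<in>{0..L}. [:real M - real k, -1::real:]"] d1 d2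
    unfolding Hp_def by linarith
  define Hf where "Hf = (\<lambda>i::int. poly Hp (real_of_int i))"
  have Hz: "Hf y = 0" if "(- int L \<le> y \<and> y \<le> -1) \<or> (int M - int L \<le> y \<and> y \<le> int M)" for y
    using that
  proof
    assume y: "- int L \<le> y \<and> y \<le> -1"
    have "(\<Prod>k\<in>{1..L}. real k + real_of_int y) = 0"
      apply (rule prod_zero, simp)
      apply (rule bexI[of _ "nat (-y)"])
      using y by auto
    then show ?thesis by (simp add: Hf_def Hpoly)
  next
    assume y: "int M - int L \<le> y \<and> y \<le> int M"
    have "(\<Prod>k\<in>{0..L}. real M - real k - real_of_int y) = 0"
      apply (rule prod_zero, simp)
      apply (rule bexI[of _ "nat (int M - y)"])
      using y by auto
    then show ?thesis by (simp add: Hf_def Hpoly)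
  qed
  define n where "n = L + 1"
  define h where "h = (\<lambda>i. if 0 \<le> i \<and> i \<le> int M - int L - 1 then Hf i else 0)"
  define Pp where "Pp = (Np^^n) Hp"
  have Pf: "(nab^^n) Hf = (\<lambda>i. poly Pp (of_int i))"
    using nab_poly[of n Hp] by (simp add: Hf_def Pp_def)
  have degP: "degree Pp \<le> L" using Np_deg[of n Hp] degH unfolding Pp_def n_def by linarith
  have va: "(nab^^n) h i = poly Pp (of_int i)" if "1 \<le> i" "i \<le> int M" for i
  proof -
    have "(nab^^n) h i = (nab^^n) Hf i"
    proof (rule nab_local, intro allI impI)
      fix y assume "i - int n \<le> y \<and> y \<le> i"
      then show "h y = Hf y" using that Hz[of y] unfolding h_def n_def by auto
    qed
    then show ?thesis using Pf by simp
  qed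
  have vb: "(nab^^n) h 0 = Hf 0"
  proof -
    have "(nab^^n) h 0 = h 0" by (rule nab_below) (auto simp: h_def)
    then show ?thesis using LM by (simp add: h_def)
  qed
  have vc: "poly Pp 0 = Hf 0 + (-1)^n * Hf (- int n)"
  proof -
    have "(nab^^n) Hf 0 - (nab^^n) h 0 = (nab^^n) (\<lambda>i. Hf i - h i) 0" by (simp add: nab_diff)
    also have "\<dots> = (nab^^n) (\<lambda>i. if i = - int n then Hf (- int n) else 0) 0"
    proof (rule nab_local, intro allI impI)
      fix y assume y: "0 - int n \<le> y \<and> y \<le> 0"
      show "Hf y - h y = (if y = - int n then Hf (- int n) else 0)"
      proof (cases "y = - int n")
        case True then show ?thesis by (simp add: h_def n_def)
      next
        case False
        then consider "y = 0" | "- int L \<le> y \<and> y \<le> -1" using y unfolding n_def by linarith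
        then show ?thesis
        proof cases
          case 1 then show ?thesis using LM False by (simp add: h_def)
        next
          case 2 then show ?thesis using Hz[of y] False by (simp add: h_def)
        qed
      qed
    qed
    also have "\<dots> = (-1)^n * Hf (- int n)"
      using nab_delta[of n "- int n" "Hf (- int n)"] by simp
    finally show ?thesis using Pf vb by (metis diff_eq_eq add.commute of_int_0)
  qed
  have orth: "(\<Sum>i\<in>{0..int M}. (nab^^n) h i * (of_int i)^j) = 0" if "j \<le> L" for j
  proof -
    have supp: "\<forall>x. (x < 0 \<or> x > int M - int L - 1) \<longrightarrow> h x = 0" by (simp add: h_def)
    have "(\<Sum>i\<in>{0..int M}. (nab^^n) h i * (of_int i)^j) =
        (-1)^n * (\<Sum>i\<in>{0..int M}. h i * (fdf^^n) (\<lambda>i. (of_int i)^j) i)"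
      by (rule sbp_iter[OF supp]) (use LM in \<open>auto simp: n_def\<close>)
    also have "(fdf^^n) (\<lambda>i. (of_int i :: real)^j) = (\<lambda>_. 0)"
      by (rule fdf_monom) (use that in \<open>simp add: n_def\<close>)
    finally show ?thesis by simp
  qed
  have P2: "\<forall>j\<in>{1..L}. (\<Sum>i=1..M. poly Pp (real i) * real i ^ j) = 0"
  proof
    fix j assume j: "j \<in> {1..L}"
    have "0 = (\<Sum>i\<in>{0..int M}. (nab^^n) h i * (of_int i)^j)" using orth[of j] j by simp
    also have "\<dots> = (nab^^n) h 0 * 0^j + (\<Sum>i=1..M. (nab^^n) h (int i) * (real i)^j)"
      by (simp add: sum_int_conv)
    also have "(\<Sum>i=1..M. (nab^^n) h (int i) * (real i)^j) = (\<Sum>i=1..M. poly Pp (real i) * real i ^ j)"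
      by (rule sum.cong) (auto simp: va)
    moreover have "(0::real)^j = 0" using j by simp
    ultimately show "(\<Sum>i=1..M. poly Pp (real i) * real i ^ j) = 0" by simp
  qed
  have P3: "(\<Sum>i=1..M. poly Pp (real i)) = - Hf 0"
  proof -
    have "0 = (\<Sum>i\<in>{0..int M}. (nab^^n) h i * (of_int i)^0)" using orth[of 0] by simp
    also have "\<dots> = (nab^^n) h 0 + (\<Sum>i=1..M. (nab^^n) h (int i))"
      by (simp add: sum_int_conv)
    also have "(\<Sum>i=1..M. (nab^^n) h (int i)) = (\<Sum>i=1..M. poly Pp (real i))"
      by (rule sum.cong) (auto simp: va)
    finally show ?thesis using vb by linarith
  qed
  have H0: "Hf 0 = fact L * (fact (L+1) * real (M choose (L+1)))"
    using prod1[of L] prodM[of M L] by (simp add: Hf_def Hpoly)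
  have Hn: "Hf (- int n) = (-1)^L * fact L * (fact (L+1) * real ((M+L+1) choose (L+1)))"
  proof -
    have a: "(\<Prod>k\<in>{1..L}. real k + real_of_int (- int n)) = (-1)^L * fact L"
    proof -
      have "(\<Prod>k\<in>{1..L}. real k + real_of_int (- int n)) = (\<Prod>k\<in>{1..L}. real k - real (L+1))"
        by (rule prod.cong) (auto simp: n_def)
      then show ?thesis using prod1neg[of L] by simp
    qed
    have b: "(\<Prod>k\<in>{0..L}. real M - real k - real_of_int (- int n)) = fact (L+1) * real ((M+L+1) choose (L+1))"
    proof -
      have "(\<Prod>k\<in>{0..L}. real M - real k - real_of_int (- int n)) = (\<Prod>k\<in>{0..L}. real (M+L+1) - real k)"
        by (rule prod.cong) (auto simp: n_def)
      then show ?thesis using prodM[of "M+L+1" L] by simp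
    qed
    show ?thesis using a b by (simp add: Hf_def Hpoly)
  qed
  have P4: "poly Pp 0 = fact L * (fact (L+1) * real (M choose (L+1)))
                 - fact L * (fact (L+1) * real ((M+L+1) choose (L+1)))"
  proof -
    have "(-1::real)^n * (-1)^L = -1" unfolding n_def by (simp flip: power_add)
    then have "(-1)^n * Hf (- int n) = - (fact L * (fact (L+1) * real ((M+L+1) choose (L+1))))"
      unfolding Hn by (metis (no_types, lifting) mult.assoc mult_minus_left mult_1)
    then show ?thesis using vc H0 by simp
  qed
  show ?thesis using degP P2 P3 P4 H0 by auto
qed



lemma poly_sum_L:
  fixes p :: "real poly"
  assumes "degree p \<le> L"
  shows "poly p x = poly p 0 + (\<Sum>j=1..L. coeff p j * x^j)"
proof -
  have "poly p x = (\<Sum>j\<le>degree p. coeff p j * x^j)" by (simp add: poly_altdef)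
  also have "\<dots> = (\<Sum>j\<le>L. coeff p j * x^j)"
    by (rule sum.mono_neutral_left) (use assms in \<open>auto simp: coeff_eq_0\<close>)
  also have "\<dots> = (\<Sum>j=0..L. coeff p j * x^j)" by (simp add: atMost_atLeast0)
  also have "\<dots> = coeff p 0 + (\<Sum>j=Suc 0..L. coeff p j * x^j)" by (simp add: sum.atLeast_Suc_atMost)
  finally show ?thesis by (simp add: poly_0_coeff_0)
qed

lemma powr_half_neg: "0 < (x::real) \<Longrightarrow> x powr (-1/2) = sqrt (1/x)"
proof -
  assume x: "0 < x"
  have "x powr (-1/2) = x powr (-(1/2))" by simp
  also have "\<dots> = inverse (x powr (1/2))" by (rule powr_minus)
  also have "\<dots> = inverse (sqrt x)" using x by (simp add: powr_half_sqrt)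
  finally show ?thesis by (simp add: real_sqrt_divide inverse_eq_divide)
qed

lemma part1:
  fixes L M :: nat
  assumes L1: "1 \<le> L" and LM: "L + 1 \<le> M"
  shows "(\<exists>w. resid M L w = (binom_ratio M L - 1) powr (-1/2)) \<and>
         (\<forall>w. (binom_ratio M L - 1) powr (-1/2) \<le> resid M L w)"
proof -
  obtain Pp :: "real poly" where degP: "degree Pp \<le> L"
    and P2: "\<forall>j\<in>{1..L}. (\<Sum>i=1..M. poly Pp (real i) * real i ^ j) = 0"
    and P3: "(\<Sum>i=1..M. poly Pp (real i)) = - (fact L * (fact (L+1) * real (M choose (L+1))))"
    and P4: "poly Pp 0 = fact L * (fact (L+1) * real (M choose (L+1)))
                 - fact L * (fact (L+1) * real ((M+L+1) choose (L+1)))"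
    using key[OF L1 LM] by blast
  define C1 where "C1 = real (M choose (L+1))"
  define C2 where "C2 = real ((M+L+1) choose (L+1))"
  define K :: real where "K = fact L * fact (L+1)"
  have K0: "K > 0" by (simp add: K_def)
  have C12: "C1 < C2" using C_strict[OF LM] by (simp add: C1_def C2_def)
  have C1p: "C1 > 0" using LM by (simp add: C1_def)
  define P0 where "P0 = poly Pp 0"
  have P0v: "P0 = K * (C1 - C2)" using P4 by (simp add: P0_def K_def C1_def C2_def algebra_simps)
  have P0n: "P0 < 0" using K0 C12 by (simp add: P0v mult_pos_neg)
  define S where "S = (\<Sum>i=1..M. poly Pp (real i))"
  have Sv: "S = - K * C1" using P3 by (simp add: S_def K_def C1_def)
  have Mpos: "real M > 0" using LM by simp
  define w where "w j = - coeff Pp j / P0 * real M ^ j" for j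
  define r where "r i = - poly Pp (real i) / P0" for i
  have rep: "poly Pp (real i) = P0 + (\<Sum>j=1..L. coeff Pp j * real i^j)" for i
    unfolding P0_def by (rule poly_sum_L[OF degP])
  have resw: "(\<Sum>j=1..L. Bmat M i j * w j) - 1 = r i" for i
  proof -
    have "(\<Sum>j=1..L. Bmat M i j * w j) = (\<Sum>j=1..L. - (coeff Pp j * real i ^ j) / P0)"
      by (rule sum.cong) (use Mpos in \<open>auto simp: Bmat_def w_def power_divide\<close>)
    also have "\<dots> = - (\<Sum>j=1..L. coeff Pp j * real i ^ j) / P0"
      by (simp add: sum_divide_distrib sum_negf)
    also have "\<dots> = - (poly Pp (real i) - P0) / P0" using rep[of i] by simp
    finally show ?thesis using P0n by (simp add: r_def field_simps)
  qed
  have orth: "(\<Sum>i=1..M. r i * (\<Sum>j=1..L. Bmat M i j * c j)) = 0" for c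
  proof -
    have "(\<Sum>i=1..M. r i * (\<Sum>j=1..L. Bmat M i j * c j))
        = (\<Sum>i=1..M. \<Sum>j=1..L. (- c j / (P0 * real M ^ j)) * (poly Pp (real i) * real i ^ j))"
      by (rule sum.cong, simp, simp add: sum_distrib_left, rule sum.cong)
         (use Mpos P0n in \<open>auto simp: r_def Bmat_def power_divide field_simps\<close>)
    also have "\<dots> = (\<Sum>j=1..L. (- c j / (P0 * real M ^ j)) * (\<Sum>i=1..M. poly Pp (real i) * real i ^ j))"
      by (subst sum.swap) (simp add: sum_distrib_left)
    also have "\<dots> = 0" using P2 by simp
    finally show ?thesis .
  qed
  have sumr2: "(\<Sum>i=1..M. (r i)^2) = S / P0"
  proof -
    have "(\<Sum>i=1..M. (r i)^2) = (\<Sum>i=1..M. r i * ((\<Sum>j=1..L. Bmat M i j * w j) - 1))"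
      by (rule sum.cong[OF refl]) (simp only: resw power2_eq_square)
    also have "\<dots> = (\<Sum>i=1..M. r i * (\<Sum>j=1..L. Bmat M i j * w j)) - (\<Sum>i=1..M. r i)"
      by (simp add: right_diff_distrib sum_subtractf)
    also have "\<dots> = - (\<Sum>i=1..M. r i)" using orth[of w] by simp
    also have "\<dots> = S / P0" by (simp add: r_def S_def sum_divide_distrib sum_negf)
    finally show ?thesis .
  qed
  have Vv: "S / P0 = 1 / (binom_ratio M L - 1)"
  proof -
    have br: "binom_ratio M L = C2 / C1" by (simp add: binom_ratio_def C1_def C2_def)
    have b1: "binom_ratio M L - 1 = (C2 - C1) / C1" using C1p by (simp add: br field_simps)
    have "S / P0 = C1 / (C2 - C1)"
    proof -
      have "C2 - C1 \<noteq> 0" "K \<noteq> 0" using C12 K0 by auto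
      then show ?thesis by (simp add: Sv P0v field_simps)
    qed
    then show ?thesis by (simp add: b1)
  qed
  have bpos: "binom_ratio M L - 1 > 0"
  proof -
    have "binom_ratio M L = C2 / C1" by (simp add: binom_ratio_def C1_def C2_def)
    moreover have "C2 / C1 > 1" using C1p C12 by simp
    ultimately show ?thesis by simp
  qed
  have val: "(binom_ratio M L - 1) powr (-1/2) = sqrt (S / P0)"
    using powr_half_neg[OF bpos] Vv by simp
  have ex: "resid M L w = (binom_ratio M L - 1) powr (-1/2)"
    unfolding val resid_def resw using sumr2 by simp
  have lo: "(binom_ratio M L - 1) powr (-1/2) \<le> resid M L w'" for w'
  proof -
    define e where "e i = (\<Sum>j=1..L. Bmat M i j * (w' j - w j))" for i
    have d: "(\<Sum>j=1..L. Bmat M i j * w' j) - 1 = r i + e i" for i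
    proof -
      have "(\<Sum>j=1..L. Bmat M i j * w' j) = (\<Sum>j=1..L. Bmat M i j * w j) + e i"
        by (simp add: e_def sum.distrib[symmetric] algebra_simps)
      then show ?thesis using resw[of i] by simp
    qed
    have "(\<Sum>i=1..M. (r i)^2) \<le> (\<Sum>i=1..M. (r i)^2) + 2 * (\<Sum>i=1..M. r i * e i) + (\<Sum>i=1..M. (e i)^2)"
      using orth[of "\<lambda>j. w' j - w j"] by (simp add: e_def sum_nonneg)
    also have "\<dots> = (\<Sum>i=1..M. (r i + e i)^2)"
      by (simp add: power2_sum sum.distrib sum_distrib_left mult.assoc)
    finally have "S / P0 \<le> (\<Sum>i=1..M. ((\<Sum>j=1..L. Bmat M i j * w' j) - 1)^2)"
      using sumr2 unfolding d by simp
    then show ?thesis unfolding val resid_def by (rule real_sqrt_le_mono)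
  qed
  show ?thesis using ex lo by blast
qed



lemma ratio_prod:
  assumes "L + 1 \<le> M"
  shows "binom_ratio M L = (\<Prod>k\<in>{0..L}. (real (M+L+1) - real k) / (real M - real k))"
proof -
  have "binom_ratio M L = (fact (L+1) * real ((M+L+1) choose (L+1))) / (fact (L+1) * real (M choose (L+1)))"
    by (simp add: binom_ratio_def)
  also have "\<dots> = (\<Prod>k\<in>{0..L}. real (M+L+1) - real k) / (\<Prod>k\<in>{0..L}. real M - real k)"
    by (simp only: prodM)
  finally show ?thesis by (simp add: prod_dividef)
qed

lemma one_plus_ge_exp: "0 \<le> (x::real) \<Longrightarrow> x \<le> 1 \<Longrightarrow> exp (x/2) \<le> 1 + x"
proof -
  assume x: "0 \<le> x" "x \<le> 1"
  have a: "1 - x/2 \<le> exp (-(x/2))" using exp_ge_add_one_self[of "-(x/2)"] by simp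
  have p: "1 - x/2 > 0" using x by simp
  have "exp (x/2) = 1 / exp (-(x/2))" by (simp add: exp_minus field_simps)
  also have "\<dots> \<le> 1 / (1 - x/2)" using a p by (intro divide_left_mono) auto
  also have "\<dots> \<le> 1 + x"
  proof -
    have xx: "x * x \<le> x" using x by (simp add: mult_left_le_one_le)
    have "1 \<le> (1 + x) * (1 - x/2)" using xx by (simp add: algebra_simps)
    then show ?thesis using p by (simp add: divide_le_eq)
  qed
  finally show ?thesis .
qed

lemma lower_bd:
  assumes L1: "1 \<le> L" and LM: "L + 1 \<le> M"
  shows "exp ((1/2) * real L ^ 2 / real M) \<le> binom_ratio M L"
proof -
  define x where "x = real (L+1) / real M"
  have x0: "0 \<le> x" and x1: "x \<le> 1" using LM by (auto simp: x_def)
  have "exp ((1/2) * real L ^ 2 / real M) \<le> exp (real (L+1) * (x/2))"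
  proof -
    have "real L ^ 2 \<le> real (L+1) * real (L+1)" by (simp add: power2_eq_square mult_mono)
    then have "(1/2) * real L ^ 2 / real M \<le> real (L+1) * (x/2)"
      using LM by (simp add: x_def field_simps)
    then show ?thesis by simp
  qed
  also have "\<dots> = exp (x/2) ^ (L+1)" by (rule exp_of_nat_mult)
  also have "\<dots> \<le> (1 + x) ^ (L+1)" by (rule power_mono) (use one_plus_ge_exp[OF x0 x1] in auto)
  also have "\<dots> = (\<Prod>k\<in>{0..L}. 1 + x)" by simp
  also have "\<dots> \<le> (\<Prod>k\<in>{0..L}. (real (M+L+1) - real k) / (real M - real k))"
  proof (rule prod_mono)
    fix k assume k: "k \<in> {0..L}"
    have Mk: "real M - real k > 0" using k LM by auto
    have "1 + x \<le> 1 + real (L+1) / (real M - real k)"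
      unfolding x_def using Mk k LM by (intro add_left_mono divide_left_mono) auto
    also have "\<dots> = (real (M+L+1) - real k) / (real M - real k)" using Mk by (simp add: field_simps)
    finally show "0 \<le> 1 + x \<and> 1 + x \<le> (real (M+L+1) - real k) / (real M - real k)" using x0 by simp
  qed
  also have "\<dots> = binom_ratio M L" using ratio_prod[OF LM] by simp
  finally show ?thesis .
qed

lemma upper_bd:
  assumes L1: "1 \<le> L" and LM: "L + 1 \<le> M"
  shows "binom_ratio M L \<le> exp (15 * real L ^ 2 / real M)"
proof (cases "2 * L + 2 \<le> M")
  case True
  have Mp: "real M > 0" using LM by simp
  have "binom_ratio M L = (\<Prod>k\<in>{0..L}. (real (M+L+1) - real k) / (real M - real k))"
    by (rule ratio_prod[OF LM])
  also have "\<dots> \<le> (\<Prod>k\<in>{0..L}. exp (2 * real (L+1) / real M))"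
  proof (rule prod_mono)
    fix k assume k: "k \<in> {0..L}"
    have Mk: "real M - real k > 0" using k LM by auto
    have Mk2: "real M \<le> 2 * (real M - real k)" using k True by auto
    have "(real (M+L+1) - real k) / (real M - real k) = 1 + real (L+1) / (real M - real k)"
      using Mk by (simp add: field_simps)
    also have "\<dots> \<le> exp (real (L+1) / (real M - real k))" by (rule exp_ge_add_one_self)
    also have "\<dots> \<le> exp (2 * real (L+1) / real M)"
    proof -
      have "real (L+1) / (real M - real k) = 2 * real (L+1) / (2 * (real M - real k))" by (rule mult_divide_mult_cancel_left[symmetric]) simp
      also have "\<dots> \<le> 2 * real (L+1) / real M"
        by (rule frac_le) (use Mp Mk2 in auto)
      finally have "real (L+1) / (real M - real k) \<le> 2 * real (L+1) / real M" .
      then show ?thesis by simp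
    qed
    finally show "0 \<le> (real (M+L+1) - real k) / (real M - real k) \<and>
        (real (M+L+1) - real k) / (real M - real k) \<le> exp (2 * real (L+1) / real M)"
      using Mk by simp
  qed
  also have "\<dots> = exp (2 * real (L+1) / real M) ^ (L+1)" by simp
  also have "\<dots> = exp (real (L+1) * (2 * real (L+1) / real M))" by (rule exp_of_nat_mult[symmetric])
  also have "\<dots> \<le> exp (15 * real L ^ 2 / real M)"
  proof -
    have "real (L+1) * (2 * real (L+1)) \<le> 15 * real L ^ 2"
    proof -
      have a: "real (L+1) \<le> 2 * real L" using L1 by simp
      have "real (L+1) * real (L+1) \<le> (2 * real L) * (2 * real L)" by (rule mult_mono[OF a a]) auto
      moreover have "0 \<le> real L * real L" by simp
      ultimately show ?thesis by (simp add: power2_eq_square algebra_simps)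
    qed
    then have "real (L+1) * (2 * real (L+1)) / real M \<le> 15 * real L ^ 2 / real M"
      by (rule divide_right_mono) simp
    then have "real (L+1) * (2 * real (L+1) / real M) \<le> 15 * real L ^ 2 / real M"
      by simp
    then show ?thesis by simp
  qed
  finally show ?thesis .
next
  case False
  have C1: "real (M choose (L+1)) \<ge> 1" using LM zero_less_binomial[of "L+1" M] by linarith
  have "binom_ratio M L \<le> real ((M+L+1) choose (L+1))"
    unfolding binom_ratio_def using divide_left_mono[OF C1, of "real ((M+L+1) choose (L+1))"] C1 LM by (simp only: div_by_1)
  also have "\<dots> \<le> 2 ^ (M+L+1)" using binomial_le_pow2[of "M+L+1" "L+1"]
    by (metis of_nat_le_iff of_nat_numeral of_nat_power)
  also have "(2::real) ^ (M+L+1) \<le> 2 ^ (5*L)" by (rule power_increasing) (use False L1 in auto)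
  also have "\<dots> \<le> exp 1 ^ (5*L)"
    by (rule power_mono) (use exp_ge_add_one_self[of 1] in auto)
  also have "\<dots> = exp (real (5*L) * 1)" by (rule exp_of_nat_mult[symmetric])
  also have "\<dots> \<le> exp (15 * real L ^ 2 / real M)"
  proof -
    have Mp: "real M > 0" using LM by simp
    have "real M \<le> 2 * real L + 1" using False by simp
    then have "5 * real L * real M \<le> 15 * real L ^ 2"
    proof -
      assume h: "real M \<le> 2 * real L + 1"
      have "5 * real L * real M \<le> 5 * real L * (2 * real L + 1)" by (rule mult_left_mono[OF h]) simp
      moreover have "real L \<le> real L * real L" using L1 by simp
      ultimately show ?thesis by (simp add: power2_eq_square algebra_simps)
    qed
    then have "5 * real L * real M / real M \<le> 15 * real L ^ 2 / real M"
      by (rule divide_right_mono) simp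
    then have "real (5*L) * 1 \<le> 15 * real L ^ 2 / real M" using Mp by simp
    then show ?thesis by simp
  qed
  finally show ?thesis .
qed


theorem lemma1:
  shows "(\<forall>L M. L \<ge> 1 \<longrightarrow> M \<ge> L + 1 \<longrightarrow>
            (\<exists>w. resid M L w = (binom_ratio M L - 1) powr (-1/2)) \<and>
            (\<forall>w. (binom_ratio M L - 1) powr (-1/2) \<le> resid M L w))
       \<and> (\<exists>c1 c2::real. 0 < c1 \<and> c1 \<le> c2 \<and>
            (\<forall>L M::nat. L \<ge> 1 \<longrightarrow> M \<ge> L + 1 \<longrightarrow>
               exp (c1 * real L ^ 2 / real M) \<le> binom_ratio M L \<and>
               binom_ratio M L \<le> exp (c2 * real L ^ 2 / real M)))"
proof
  show "\<forall>L M. L \<ge> 1 \<longrightarrow> M \<ge> L + 1 \<longrightarrow>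
            (\<exists>w. resid M L w = (binom_ratio M L - 1) powr (-1/2)) \<and>
            (\<forall>w. (binom_ratio M L - 1) powr (-1/2) \<le> resid M L w)"
    using part1 by blast
  show "\<exists>c1 c2::real. 0 < c1 \<and> c1 \<le> c2 \<and>
            (\<forall>L M::nat. L \<ge> 1 \<longrightarrow> M \<ge> L + 1 \<longrightarrow>
               exp (c1 * real L ^ 2 / real M) \<le> binom_ratio M L \<and>
               binom_ratio M L \<le> exp (c2 * real L ^ 2 / real M))"
  proof (rule exI[of _ "1/2"], rule exI[of _ 15], intro conjI allI impI)
    fix L M :: nat assume "L \<ge> 1" "M \<ge> L + 1"
    then show "exp ((1/2) * real L ^ 2 / real M) \<le> binom_ratio M L"
      and "binom_ratio M L \<le> exp (15 * real L ^ 2 / real M)"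
      using lower_bd upper_bd by auto
  qed simp_all
qed

end
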